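(* With the notation of the context, for every $v=\sum_{i,j}x_{ij}(i,j)\in V$ we have $$\kappa_A(v)\ \le\ \frac1N\sum_{i\ge j}x_{ij}+\Big(1-\frac1N\Big)\sum_{i<j}x_{ij},$$ and the same inequality holds with $\kappa_B$ in place of $\kappa_A$.
   Context: Let $A,B$ be groups, $L\ge1$, $a_1,\dots,a_L\in A\setminus\{1\}$, $b_1,\dots,b_L\in B\setminus\{1\}$. Let $N\in\{2,3,\dots\}\cup\{\infty\}$ be the minimum of the orders of $a_1,\dots,a_L,b_1,\dots,b_L$ (convention $1/\infty=0$). Let $W$ be the real vector space with basis the formal symbols $(i,j)$, $1\le i,j\le L$. Let $V=\{\sum_{i,j}x_{ij}(i,j): x_{ij}\ge0,\ \sum_i x_{ij}=1 \text{ for all } j,\ \sum_j x_{ij}=1\text{ for all } i\}$. A disk vector in $A$ is an element of $W$ of the form $\sum_{j=1}^k (i_j,i_{j+1})$ with $k\ge1$, indices $i_1,\dots,i_k\in\{1,\dots,L\}$, $i_{k+1}=i_1$, and $a_{i_1}a_{i_2}\cdots a_{i_k}=1$ in $A$; let $\mathcal D_A$ be the set of disk vectors in $A$, and define $\mathcal D_B$ analogously using the $b_i$. For $v\in V$ set $\kappa_A(v)=\sup\{\sum_s t_s : v=\sum_s t_s d_s+\sum_{i,j}x'_{ij}(i,j),\ t_s\ge0,\ d_s\in\mathcal D_A,\ x'_{ij}\ge 0\}$ (finite sums), and define $\kappa_B$ analogously with $\mathcal D_B$. *)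

theory Defs
  imports "HOL-Algebra.Multiplicative_Group" "HOL-Library.Extended_Nat" Complex_Main
begin

text \<open>Order of a group element as an extended natural (infinite order gives \<infinity>).
  group.ord returns 0 exactly for elements of infinite order.\<close>
definition eord :: "('a, 'b) monoid_scheme \<Rightarrow> 'a \<Rightarrow> enat" where
  "eord G x = (if group.ord G x = 0 then \<infinity> else enat (group.ord G x))"

definition Nmin :: "('a, 'c) monoid_scheme \<Rightarrow> ('b, 'd) monoid_scheme \<Rightarrow> nat
    \<Rightarrow> (nat \<Rightarrow> 'a) \<Rightarrow> (nat \<Rightarrow> 'b) \<Rightarrow> enat" where
  "Nmin A B L a b = Min ((\<lambda>i. eord A (a i)) ` {1..L} \<union> (\<lambda>i. eord B (b i)) ` {1..L})"

definition recip :: "enat \<Rightarrow> real" where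
  "recip N = (case N of enat n \<Rightarrow> 1 / real n | \<infinity> \<Rightarrow> 0)"

definition gprod :: "('a, 'b) monoid_scheme \<Rightarrow> 'a list \<Rightarrow> 'a" where
  "gprod G xs = foldr (\<lambda>x y. x \<otimes>\<^bsub>G\<^esub> y) xs \<one>\<^bsub>G\<^esub>"

text \<open>Elements of W are represented by their coefficient functions x i j, (i,j) \<in> {1..L}^2.\<close>
definition inV :: "nat \<Rightarrow> (nat \<Rightarrow> nat \<Rightarrow> real) \<Rightarrow> bool" where
  "inV L x \<longleftrightarrow> (\<forall>i\<in>{1..L}. \<forall>j\<in>{1..L}. x i j \<ge> 0)
     \<and> (\<forall>j\<in>{1..L}. (\<Sum>i=1..L. x i j) = 1)
     \<and> (\<forall>i\<in>{1..L}. (\<Sum>j=1..L. x i j) = 1)"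

definition disk_seq :: "('a, 'b) monoid_scheme \<Rightarrow> nat \<Rightarrow> (nat \<Rightarrow> 'a) \<Rightarrow> nat list \<Rightarrow> bool" where
  "disk_seq G L a is \<longleftrightarrow> is \<noteq> [] \<and> set is \<subseteq> {1..L} \<and> gprod G (map a is) = \<one>\<^bsub>G\<^esub>"

text \<open>The vector \<Sum>_{t} (i_t, i_{t+1}) with i_{k+1} = i_1, as coefficient function.\<close>
definition disk_vec :: "nat list \<Rightarrow> nat \<Rightarrow> nat \<Rightarrow> real" where
  "disk_vec is i j = real (card {t. t < length is \<and> is ! t = i
                                 \<and> is ! ((t + 1) mod length is) = j})"

definition kappa :: "('a, 'b) monoid_scheme \<Rightarrow> nat \<Rightarrow> (nat \<Rightarrow> 'a)
    \<Rightarrow> (nat \<Rightarrow> nat \<Rightarrow> real) \<Rightarrow> real" where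
  "kappa G L a x = Sup {(\<Sum>(t, is) \<leftarrow> ds. t) | ds.
      (\<forall>(t, is) \<in> set ds. t \<ge> 0 \<and> disk_seq G L a is)
      \<and> (\<exists>x'. \<forall>i\<in>{1..L}. \<forall>j\<in>{1..L}. x' i j \<ge> 0
              \<and> x i j = (\<Sum>(t, is) \<leftarrow> ds. t * disk_vec is i j) + x' i j)}"

end

theory Submission imports Defs begin

definition wt :: "real \<Rightarrow> nat \<Rightarrow> nat \<Rightarrow> real" where
  "wt r i j = (if j \<le> i then r else 1 - r)"

definition WW :: "real \<Rightarrow> nat \<Rightarrow> (nat \<Rightarrow> nat \<Rightarrow> real) \<Rightarrow> real" where
  "WW r L y = (\<Sum>i\<in>{1..L}. \<Sum>j\<in>{1..L}. wt r i j * y i j)"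

lemma cyc_eq:
  fixes xs :: "nat list"
  assumes "xs \<noteq> []" and h: "\<forall>t<length xs. xs!((t+1) mod length xs) \<le> xs!t"
  shows "\<forall>t<length xs. xs!t = xs!0"
proof -
  define k where "k = length xs"
  have k0: "k > 0" using assms(1) k_def by simp
  have mono: "s \<le> t \<Longrightarrow> t < k \<Longrightarrow> xs!t \<le> xs!s" for s t
  proof (induction t)
    case 0 then show ?case by simp
  next
    case (Suc t)
    have "xs!((t+1) mod k) \<le> xs!t" using h[rule_format, of t] Suc.prems k_def by simp
    moreover have "(t+1) mod k = Suc t" using Suc.prems by simp
    ultimately show ?case using Suc by (cases "s = Suc t") auto
  qed
  have "xs!(((k-1)+1) mod k) \<le> xs!(k-1)" using h[rule_format, of "k-1"] k0 k_def by simp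
  then have w: "xs!0 \<le> xs!(k-1)" using k0 by simp
  show ?thesis unfolding k_def[symmetric]
  proof (intro allI impI)
    fix t assume t: "t < k"
    have "xs!(k-1) \<le> xs!t" using mono[of t "k-1"] t by simp
    moreover have "xs!t \<le> xs!0" using mono[of 0 t] t by simp
    ultimately show "xs!t = xs!0" using w by simp
  qed
qed

lemma cyc_nonasc:
  fixes xs :: "nat list"
  assumes "xs \<noteq> []"
  shows "\<exists>t<length xs. xs!((t+1) mod length xs) \<le> xs!t"
proof (rule ccontr)
  assume "\<not> ?thesis"
  then have h: "\<forall>t<length xs. xs!t < xs!((t+1) mod length xs)" by auto
  define k where "k = length xs"
  have k0: "k > 0" using assms(1) k_def by simp
  have inc: "t < k \<Longrightarrow> xs!0 + t \<le> xs!t" for t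
  proof (induction t)
    case 0 then show ?case by simp
  next
    case (Suc t)
    have "xs!t < xs!((t+1) mod k)" using h[rule_format, of t] Suc.prems k_def by simp
    moreover have "(t+1) mod k = Suc t" using Suc.prems by simp
    ultimately show ?case using Suc by auto
  qed
  have "xs!(k-1) < xs!(((k-1)+1) mod k)" using h[rule_format, of "k-1"] k0 k_def by simp
  then have "xs!(k-1) < xs!0" using k0 by simp
  moreover have "xs!0 + (k-1) \<le> xs!(k-1)" using inc[of "k-1"] k0 by simp
  ultimately show False by simp
qed

lemma dv_sum:
  assumes "set is \<subseteq> {1..L}"
  shows "WW r L (disk_vec is) = (\<Sum>t<length is. wt r (is!t) (is!((t+1) mod length is)))"
proof -
  define k where "k = length is"
  have c: "disk_vec is i j = (\<Sum>t<k. if is!t = i \<and> is!((t+1) mod k) = j then 1 else 0)" for i j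
  proof -
    have "{t. t < k \<and> is ! t = i \<and> is ! ((t + 1) mod k) = j} = {t\<in>{..<k}. is ! t = i \<and> is ! ((t + 1) mod k) = j}" by auto
    then show ?thesis unfolding disk_vec_def k_def[symmetric]
      by (simp add: sum.inter_filter[symmetric])
  qed
  have "WW r L (disk_vec is) = (\<Sum>i\<in>{1..L}. \<Sum>j\<in>{1..L}. \<Sum>t<k. if is!t = i \<and> is!((t+1) mod k) = j then wt r i j else 0)"
    unfolding WW_def c by (simp add: sum_distrib_left if_distrib cong: if_cong)
  also have "\<dots> = (\<Sum>t<k. \<Sum>i\<in>{1..L}. \<Sum>j\<in>{1..L}. if is!t = i \<and> is!((t+1) mod k) = j then wt r i j else 0)"
    by (simp add: sum.swap[of _ "{1..L}"] sum.swap[of _ "{..<k}"])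
  also have "\<dots> = (\<Sum>t<k. wt r (is!t) (is!((t+1) mod k)))"
  proof (rule sum.cong[OF refl])
    fix t assume t: "t \<in> {..<k}"
    then have k0: "k > 0" by auto
    have m1: "is!t \<in> {1..L}" using assms t k_def by (auto dest: nth_mem)
    have m2: "is!((t+1) mod k) \<in> {1..L}" using assms k0 k_def by (metis nth_mem mod_less_divisor subsetD)
    have "(\<Sum>i\<in>{1..L}. \<Sum>j\<in>{1..L}. if is!t = i \<and> is!((t+1) mod k) = j then wt r i j else 0)
       = (\<Sum>i\<in>{1..L}. if is!t = i then (\<Sum>j\<in>{1..L}. if is!((t+1) mod k) = j then wt r i j else 0) else 0)"
      by (rule sum.cong) auto
    also have "\<dots> = wt r (is!t) (is!((t+1) mod k))" using m1 m2 by simp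
    finally show "(\<Sum>i\<in>{1..L}. \<Sum>j\<in>{1..L}. if is!t = i \<and> is!((t+1) mod k) = j then wt r i j else 0) = wt r (is!t) (is!((t+1) mod k))" .
  qed
  finally show ?thesis unfolding k_def .
qed

lemma gprod_rep:
  assumes "group G" "y \<in> carrier G"
  shows "gprod G (replicate k y) = y [^]\<^bsub>G\<^esub> k"
proof (induction k)
  case 0 then show ?case by (simp add: gprod_def)
next
  case (Suc k)
  have "gprod G (replicate (Suc k) y) = y \<otimes>\<^bsub>G\<^esub> gprod G (replicate k y)" by (simp add: gprod_def)
  then show ?case using Suc monoid.nat_pow_Suc2[OF group.is_monoid[OF assms(1)] assms(2)] by simp
qed

lemma diskW:
  assumes G: "group G" and car: "\<forall>i\<in>{1..L}. a i \<in> carrier G" and r0: "0 \<le> r" and r1: "r \<le> 1"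
    and ordh: "\<forall>i\<in>{1..L}. \<forall>k. k \<ge> 1 \<longrightarrow> a i [^]\<^bsub>G\<^esub> k = \<one>\<^bsub>G\<^esub> \<longrightarrow> 1 \<le> real k * r"
    and d: "disk_seq G L a is"
  shows "1 \<le> WW r L (disk_vec is)"
proof -
  have ne: "is \<noteq> []" and sub: "set is \<subseteq> {1..L}" and pr: "gprod G (map a is) = \<one>\<^bsub>G\<^esub>"
    using d unfolding disk_seq_def by auto
  define k where "k = length is"
  define g where "g t = wt r (is!t) (is!((t+1) mod k))" for t
  have W: "WW r L (disk_vec is) = (\<Sum>t<k. g t)" using dv_sum[OF sub] unfolding g_def k_def by simp
  have gnn: "g t \<ge> 0" for t using r0 r1 unfolding g_def wt_def by auto
  show ?thesis
  proof (cases "\<exists>t<k. is!t < is!((t+1) mod k)")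
    case True
    then obtain t where t: "t < k" "is!t < is!((t+1) mod k)" by auto
    obtain t' where t': "t' < k" "is!((t'+1) mod k) \<le> is!t'" using cyc_nonasc[OF ne] k_def by auto
    have tt: "t \<noteq> t'" using t t' by auto
    have "1 = g t + g t'" using t t' unfolding g_def wt_def by auto
    also have "\<dots> = (\<Sum>s\<in>{t,t'}. g s)" using tt by (simp add: sum.insert)
    also have "\<dots> \<le> (\<Sum>s<k. g s)" by (rule sum_mono2) (use t t' gnn in auto)
    finally show ?thesis using W by simp
  next
    case False
    then have "\<forall>t<length is. is!((t+1) mod length is) \<le> is!t" unfolding k_def by auto
    note eq = cyc_eq[OF ne this]
    define i0 where "i0 = is!0"
    have i0S: "i0 \<in> {1..L}" using sub ne unfolding i0_def by (simp add: subset_iff)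
    have rep: "is = replicate k i0"
      by (rule nth_equalityI) (use eq in \<open>auto simp: k_def i0_def\<close>)
    have k1: "k \<ge> 1" using ne k_def by (cases "is") auto
    have "a i0 [^]\<^bsub>G\<^esub> k = \<one>\<^bsub>G\<^esub>"
      using pr gprod_rep[OF G, of "a i0" k] car i0S rep by simp
    then have "1 \<le> real k * r" using ordh i0S k1 by blast
    moreover have "(\<Sum>t<k. g t) = real k * r"
    proof -
      have "g t = r" if "t < k" for t
      proof -
        have "(t+1) mod k < k" using k1 by simp
        then show ?thesis using that eq unfolding g_def wt_def k_def by simp
      qed
      then show ?thesis by simp
    qed
    ultimately show ?thesis using W by simp
  qed
qed

lemma WW_add: "WW r L (\<lambda>i j. y i j + z i j) = WW r L y + WW r L z"
  unfolding WW_def by (simp add: distrib_left sum.distrib)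

lemma WW_list: "WW r L (\<lambda>i j. (\<Sum>(t, is) \<leftarrow> ds. t * disk_vec is i j)) = (\<Sum>(t, is) \<leftarrow> ds. t * WW r L (disk_vec is))"
proof (induction ds)
  case Nil then show ?case by (simp add: WW_def)
next
  case (Cons p ds)
  obtain t ss where p: "p = (t, ss)" by (cases p)
  have "WW r L (\<lambda>i j. (\<Sum>(t, is) \<leftarrow> p # ds. t * disk_vec is i j))
     = WW r L (\<lambda>i j. t * disk_vec ss i j + (\<Sum>(t, is) \<leftarrow> ds. t * disk_vec is i j))" by (simp add: p)
  also have "\<dots> = WW r L (\<lambda>i j. t * disk_vec ss i j) + WW r L (\<lambda>i j. (\<Sum>(t, is) \<leftarrow> ds. t * disk_vec is i j))"
    by (rule WW_add)
  also have "WW r L (\<lambda>i j. t * disk_vec ss i j) = t * WW r L (disk_vec ss)"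
    unfolding WW_def by (simp add: sum_distrib_left algebra_simps)
  finally show ?case using Cons p by simp
qed

lemma core:
  assumes G: "group G" and car: "\<forall>i\<in>{1..L}. a i \<in> carrier G" and r0: "0 \<le> r" and r1: "r \<le> 1"
    and ordh: "\<forall>i\<in>{1..L}. \<forall>k. k \<ge> 1 \<longrightarrow> a i [^]\<^bsub>G\<^esub> k = \<one>\<^bsub>G\<^esub> \<longrightarrow> 1 \<le> real k * r"
    and xnn: "\<forall>i\<in>{1..L}. \<forall>j\<in>{1..L}. x i j \<ge> 0"
  shows "kappa G L a x \<le> WW r L x"
  unfolding kappa_def
proof (rule cSup_least)
  show "{(\<Sum>(t, is) \<leftarrow> ds. t) | ds.
      (\<forall>(t, is) \<in> set ds. t \<ge> 0 \<and> disk_seq G L a is)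
      \<and> (\<exists>x'. \<forall>i\<in>{1..L}. \<forall>j\<in>{1..L}. x' i j \<ge> 0
              \<and> x i j = (\<Sum>(t, is) \<leftarrow> ds. t * disk_vec is i j) + x' i j)} \<noteq> {}"
  proof -
    have "(\<Sum>(t, is) \<leftarrow> []. t) \<in> {(\<Sum>(t, is) \<leftarrow> ds. t) | ds.
      (\<forall>(t, is) \<in> set ds. t \<ge> 0 \<and> disk_seq G L a is)
      \<and> (\<exists>x'. \<forall>i\<in>{1..L}. \<forall>j\<in>{1..L}. x' i j \<ge> 0
              \<and> x i j = (\<Sum>(t, is) \<leftarrow> ds. t * disk_vec is i j) + x' i j)}"
      using xnn by (intro CollectI exI[of _ "[]"]) auto
    then show ?thesis by blast
  qed
next
  fix v assume "v \<in> {(\<Sum>(t, is) \<leftarrow> ds. t) | ds.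
      (\<forall>(t, is) \<in> set ds. t \<ge> 0 \<and> disk_seq G L a is)
      \<and> (\<exists>x'. \<forall>i\<in>{1..L}. \<forall>j\<in>{1..L}. x' i j \<ge> 0
              \<and> x i j = (\<Sum>(t, is) \<leftarrow> ds. t * disk_vec is i j) + x' i j)}"
  then obtain ds x' where v: "v = (\<Sum>(t, is) \<leftarrow> ds. t)"
    and ds: "\<forall>(t, is) \<in> set ds. t \<ge> 0 \<and> disk_seq G L a is"
    and x': "\<forall>i\<in>{1..L}. \<forall>j\<in>{1..L}. x' i j \<ge> 0
              \<and> x i j = (\<Sum>(t, is) \<leftarrow> ds. t * disk_vec is i j) + x' i j" by blast
  have "WW r L x = WW r L (\<lambda>i j. (\<Sum>(t, is) \<leftarrow> ds. t * disk_vec is i j) + x' i j)"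
    unfolding WW_def using x' by (intro sum.cong refl) auto
  also have "\<dots> = (\<Sum>(t, is) \<leftarrow> ds. t * WW r L (disk_vec is)) + WW r L x'"
    by (simp add: WW_add WW_list)
  finally have e: "WW r L x = (\<Sum>(t, is) \<leftarrow> ds. t * WW r L (disk_vec is)) + WW r L x'" .
  have "WW r L x' \<ge> 0" unfolding WW_def
    using x' r0 r1 by (intro sum_nonneg) (auto simp: wt_def)
  moreover have "(\<Sum>(t, is) \<leftarrow> ds. t) \<le> (\<Sum>(t, is) \<leftarrow> ds. t * WW r L (disk_vec is))"
  proof (rule sum_list_mono)
    fix p assume "p \<in> set ds"
    then obtain t ss where p: "p = (t, ss)" "t \<ge> 0" "disk_seq G L a ss" using ds by (cases p) auto
    have "1 \<le> WW r L (disk_vec ss)" by (rule diskW[OF G car r0 r1 ordh p(3)])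
    then have "t * 1 \<le> t * WW r L (disk_vec ss)" using p(2) by (intro mult_left_mono) auto
    then show "(case p of (t, is) \<Rightarrow> t) \<le> (case p of (t, is) \<Rightarrow> t * WW r L (disk_vec is))" using p by simp
  qed
  ultimately show "v \<le> WW r L x" using e v by simp
qed

lemma rhs_eq:
  "r * (\<Sum>(i, j) \<in> {(i, j). i \<in> {1..L} \<and> j \<in> {1..L} \<and> j \<le> i}. x i j)
    + (1 - r) * (\<Sum>(i, j) \<in> {(i, j). i \<in> {1..L} \<and> j \<in> {1..L} \<and> i < j}. x i j) = WW r L x"
proof -
  have s1: "(\<Sum>(i, j) \<in> {(i, j). i \<in> {1..L} \<and> j \<in> {1..L} \<and> j \<le> i}. x i j)
     = (\<Sum>i\<in>{1..L}. \<Sum>j\<in>{1..L}. if j \<le> i then x i j else 0)"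
  proof -
    have "{(i, j). i \<in> {1..L} \<and> j \<in> {1..L} \<and> j \<le> i} = Sigma {1..L} (\<lambda>i. {j\<in>{1..L}. j \<le> i})" by auto
    note eqS = this
    have "(\<Sum>(i, j) \<in> {(i, j). i \<in> {1..L} \<and> j \<in> {1..L} \<and> j \<le> i}. x i j)
       = (\<Sum>i\<in>{1..L}. \<Sum>j\<in>{j\<in>{1..L}. j \<le> i}. x i j)"
      unfolding eqS by (rule sum.Sigma[symmetric]) auto
    also have "\<dots> = (\<Sum>i\<in>{1..L}. \<Sum>j\<in>{1..L}. if j \<le> i then x i j else 0)"
      by (intro sum.cong refl sum.inter_filter) simp
    finally show ?thesis .
  qed
  have s2: "(\<Sum>(i, j) \<in> {(i, j). i \<in> {1..L} \<and> j \<in> {1..L} \<and> i < j}. x i j)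
     = (\<Sum>i\<in>{1..L}. \<Sum>j\<in>{1..L}. if j \<le> i then 0 else x i j)"
  proof -
    have "{(i, j). i \<in> {1..L} \<and> j \<in> {1..L} \<and> i < j} = Sigma {1..L} (\<lambda>i. {j\<in>{1..L}. \<not> j \<le> i})" by auto
    note eqS = this
    have "(\<Sum>(i, j) \<in> {(i, j). i \<in> {1..L} \<and> j \<in> {1..L} \<and> i < j}. x i j)
       = (\<Sum>i\<in>{1..L}. \<Sum>j\<in>{j\<in>{1..L}. \<not> j \<le> i}. x i j)"
      unfolding eqS by (rule sum.Sigma[symmetric]) auto
    also have "\<dots> = (\<Sum>i\<in>{1..L}. \<Sum>j\<in>{1..L}. if \<not> j \<le> i then x i j else 0)"
      by (intro sum.cong refl sum.inter_filter) simp
    also have "\<dots> = (\<Sum>i\<in>{1..L}. \<Sum>j\<in>{1..L}. if j \<le> i then 0 else x i j)"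
      by (intro sum.cong refl) auto
    finally show ?thesis .
  qed
  show ?thesis unfolding s1 s2 WW_def wt_def
    by (auto simp add: sum_distrib_left sum.distrib[symmetric] intro!: sum.cong)
qed

lemma eord_cases: "eord G y = \<infinity> \<or> (\<exists>m\<ge>1. eord G y = enat m)"
  unfolding eord_def by auto

lemma eord_pow:
  assumes "group G" "y \<in> carrier G" "k \<ge> 1" "y [^]\<^bsub>G\<^esub> k = \<one>\<^bsub>G\<^esub>"
  shows "eord G y \<le> enat k"
proof -
  have d: "group.ord G y dvd k" using group.pow_eq_id[OF assms(1) assms(2)] assms(4) by simp
  then have "group.ord G y \<noteq> 0" using assms(3) by auto
  moreover have "group.ord G y \<le> k" using d assms(3) by (simp add: dvd_imp_le)
  ultimately show ?thesis unfolding eord_def by simp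
qed

lemma recip_bound: "M = \<infinity> \<or> (\<exists>m\<ge>1. M = enat m) \<Longrightarrow> 0 \<le> recip M \<and> recip M \<le> 1"
  unfolding recip_def by auto

lemma recip_pow: "M = \<infinity> \<or> (\<exists>m\<ge>1. M = enat m) \<Longrightarrow> M \<le> enat k \<Longrightarrow> 1 \<le> real k * recip M"
  unfolding recip_def by (auto simp: field_simps)

theorem mainTheorem5:
  fixes A :: "('a, 'c) monoid_scheme" and B :: "('b, 'd) monoid_scheme"
    and L :: nat and a :: "nat \<Rightarrow> 'a" and b :: "nat \<Rightarrow> 'b"
    and x :: "nat \<Rightarrow> nat \<Rightarrow> real"
  assumes "group A" and "group B" and "L \<ge> 1"
    and "\<forall>i\<in>{1..L}. a i \<in> carrier A \<and> a i \<noteq> \<one>\<^bsub>A\<^esub>"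
    and "\<forall>i\<in>{1..L}. b i \<in> carrier B \<and> b i \<noteq> \<one>\<^bsub>B\<^esub>"
    and "inV L x"
  shows "(kappa A L a x \<le> recip (Nmin A B L a b) * (\<Sum>(i, j) \<in> {(i, j). i \<in> {1..L} \<and> j \<in> {1..L} \<and> j \<le> i}. x i j)
           + (1 - recip (Nmin A B L a b)) * (\<Sum>(i, j) \<in> {(i, j). i \<in> {1..L} \<and> j \<in> {1..L} \<and> i < j}. x i j))
    \<and> (kappa B L b x \<le> recip (Nmin A B L a b) * (\<Sum>(i, j) \<in> {(i, j). i \<in> {1..L} \<and> j \<in> {1..L} \<and> j \<le> i}. x i j)
           + (1 - recip (Nmin A B L a b)) * (\<Sum>(i, j) \<in> {(i, j). i \<in> {1..L} \<and> j \<in> {1..L} \<and> i < j}. x i j))"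
proof -
  note as = assms
  define M where "M = Nmin A B L a b"
  define E where "E = (\<lambda>i. eord A (a i)) ` {1..L} \<union> (\<lambda>i. eord B (b i)) ` {1..L}"
  have Mdef: "M = Min E" unfolding M_def E_def Nmin_def by simp
  have fE: "finite E" and nE: "E \<noteq> {}" unfolding E_def using as(3) by auto
  have MinE: "M \<in> E" using Min_in[OF fE nE] Mdef by simp
  have Mc: "M = \<infinity> \<or> (\<exists>m\<ge>1. M = enat m)"
  proof -
    from MinE obtain i where "M = eord A (a i) \<or> M = eord B (b i)" unfolding E_def by auto
    then show ?thesis using eord_cases[of A "a i"] eord_cases[of B "b i"] by auto
  qed
  have rb: "0 \<le> recip M" "recip M \<le> 1" using recip_bound[OF Mc] by auto
  have xnn: "\<forall>i\<in>{1..L}. \<forall>j\<in>{1..L}. x i j \<ge> 0" using as(6) unfolding inV_def by auto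
  have ordA: "\<forall>i\<in>{1..L}. \<forall>k. k \<ge> 1 \<longrightarrow> a i [^]\<^bsub>A\<^esub> k = \<one>\<^bsub>A\<^esub> \<longrightarrow> 1 \<le> real k * recip M"
  proof (intro ballI allI impI)
    fix i and k :: nat assume i: "i \<in> {1..L}" and k: "k \<ge> 1" "a i [^]\<^bsub>A\<^esub> k = \<one>\<^bsub>A\<^esub>"
    have "M \<le> eord A (a i)" unfolding Mdef using fE i E_def by (intro Min_le) auto
    also have "\<dots> \<le> enat k" using eord_pow[OF as(1) _ k] as(4) i by auto
    finally show "1 \<le> real k * recip M" using recip_pow[OF Mc] by simp
  qed
  have ordB: "\<forall>i\<in>{1..L}. \<forall>k. k \<ge> 1 \<longrightarrow> b i [^]\<^bsub>B\<^esub> k = \<one>\<^bsub>B\<^esub> \<longrightarrow> 1 \<le> real k * recip M"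
  proof (intro ballI allI impI)
    fix i and k :: nat assume i: "i \<in> {1..L}" and k: "k \<ge> 1" "b i [^]\<^bsub>B\<^esub> k = \<one>\<^bsub>B\<^esub>"
    have "M \<le> eord B (b i)" unfolding Mdef using fE i E_def by (intro Min_le) auto
    also have "\<dots> \<le> enat k" using eord_pow[OF as(2) _ k] as(5) i by auto
    finally show "1 \<le> real k * recip M" using recip_pow[OF Mc] by simp
  qed
  have cA: "kappa A L a x \<le> WW (recip M) L x"
    using core[OF as(1) _ rb ordA xnn] as(4) by auto
  have cB: "kappa B L b x \<le> WW (recip M) L x"
    using core[OF as(2) _ rb ordB xnn] as(5) by auto
  show ?thesis using cA cB unfolding rhs_eq M_def[symmetric] by simp
qed

end
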